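(* Let $\alpha\subseteq E$, let $\hat{\mathbb{G}},\mathbb{G}$ be $E$-groups and let $h:\hat{\mathbb{G}}[\alpha]\to\mathbb{G}[\alpha]$ be a group homomorphism with $h(e)=e$ for all $e\in\alpha$ whose restriction to $\hat{\mathbb{G}}[\alpha']$ is injective for every $\alpha'\subsetneq\alpha$. If $\mathbb{G}[\alpha]$ is $N$-acyclic (as an $\alpha$-group) for some $N\ge2$, then $\hat{\mathbb{G}}[\alpha]$ is $N$-acyclic.
   Context: Let $E$ be a finite set. An $E$-group is a group $\mathbb{G}$ together with an inclusion $E\subseteq\mathbb{G}$ such that $E$ generates $\mathbb{G}$ and every $e\in E$ satisfies $e\neq1$, $e^2=1$. For $\alpha\subseteq E$, $\mathbb{G}[\alpha]$ is the subgroup generated by $\alpha$, itself an $\alpha$-group. A coset cycle of length $n\ge2$ in an $\alpha$-group $\mathbb{K}$ is a cyclically indexed family $(g_i,\alpha_i)_{i\in\mathbb{Z}_n}$ with $g_i\in\mathbb{K}$, $\alpha_i\subseteq\alpha$, such that for all $i$: $g_{i+1}\in g_i\mathbb{K}[\alpha_i]$ and $g_i\mathbb{K}[\alpha_i\cap\alpha_{i-1}]\cap g_{i+1}\mathbb{K}[\alpha_i\cap\alpha_{i+1}]=\emptyset$. $\mathbb{K}$ is $N$-acyclic if it admits no coset cycle of length $n$ with $2\le n\le N$. *)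

theory Defs
  imports "HOL-Algebra.Algebra"
begin

definition E_group :: "('a, 'm) monoid_scheme \<Rightarrow> 'e set \<Rightarrow> ('e \<Rightarrow> 'a) \<Rightarrow> bool" where
  "E_group G E emb \<longleftrightarrow> group G \<and> finite E \<and> inj_on emb E \<and> emb ` E \<subseteq> carrier G \<and>
     generate G (emb ` E) = carrier G \<and>
     (\<forall>e\<in>E. emb e \<noteq> \<one>\<^bsub>G\<^esub> \<and> emb e \<otimes>\<^bsub>G\<^esub> emb e = \<one>\<^bsub>G\<^esub>)"

definition subgrp :: "('a, 'm) monoid_scheme \<Rightarrow> ('e \<Rightarrow> 'a) \<Rightarrow> 'e set \<Rightarrow> ('a, 'm) monoid_scheme" where
  "subgrp G emb \<alpha> = G\<lparr>carrier := generate G (emb ` \<alpha>)\<rparr>"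

definition coset_cycle :: "('a, 'm) monoid_scheme \<Rightarrow> ('e \<Rightarrow> 'a) \<Rightarrow> 'e set \<Rightarrow> nat
    \<Rightarrow> (nat \<Rightarrow> 'a) \<Rightarrow> (nat \<Rightarrow> 'e set) \<Rightarrow> bool" where
  "coset_cycle K emb \<alpha> n g a \<longleftrightarrow> 2 \<le> n \<and>
     (\<forall>i<n. g i \<in> carrier K \<and> a i \<subseteq> \<alpha> \<and>
        g (Suc i mod n) \<in> g i <#\<^bsub>K\<^esub> generate K (emb ` a i) \<and>
        (g i <#\<^bsub>K\<^esub> generate K (emb ` (a i \<inter> a ((i + n - 1) mod n))))
        \<inter> (g (Suc i mod n) <#\<^bsub>K\<^esub> generate K (emb ` (a i \<inter> a (Suc i mod n)))) = {})"

definition N_acyclic :: "('a, 'm) monoid_scheme \<Rightarrow> ('e \<Rightarrow> 'a) \<Rightarrow> 'e set \<Rightarrow> nat \<Rightarrow> bool" where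
  "N_acyclic K emb \<alpha> N \<longleftrightarrow> (\<forall>n g a. 2 \<le> n \<and> n \<le> N \<longrightarrow> \<not> coset_cycle K emb \<alpha> n g a)"

end

theory Submission
  imports Defs
begin

lemma idx_prev: "i < n \<Longrightarrow> 2 \<le> n \<Longrightarrow> Suc ((i + n - 1) mod n) mod n = i \<and> (i + n - 1) mod n < n"
proof (cases i)
  case 0 assume "2 \<le> n" then show ?thesis using 0 by simp
next
  case (Suc k) assume "i < n" "2 \<le> n"
  then have "(i + n - 1) mod n = k" using Suc
    by (metis Suc_lessD add_Suc diff_Suc_1 mod_add_self2 mod_less)
  then show ?thesis using Suc \<open>i < n\<close> by simp
qed

theorem mainTheorem7:
  fixes Gh :: "'a monoid" and G :: "'b monoid" and E :: "'e set"
    and embh :: "'e \<Rightarrow> 'a" and emb :: "'e \<Rightarrow> 'b" and h :: "'a \<Rightarrow> 'b"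
    and \<alpha> :: "'e set" and N :: nat
  assumes "E_group Gh E embh" and "E_group G E emb" and "\<alpha> \<subseteq> E"
    and "h \<in> hom (subgrp Gh embh \<alpha>) (subgrp G emb \<alpha>)"
    and "\<forall>e\<in>\<alpha>. h (embh e) = emb e"
    and "\<forall>\<alpha>'. \<alpha>' \<subset> \<alpha> \<longrightarrow> inj_on h (generate Gh (embh ` \<alpha>'))"
    and "N \<ge> 2"
    and "N_acyclic (subgrp G emb \<alpha>) emb \<alpha> N"
  shows "N_acyclic (subgrp Gh embh \<alpha>) embh \<alpha> N"
proof -
  define K where "K = subgrp Gh embh \<alpha>"
  define L where "L = subgrp G emb \<alpha>"
  have gGh: "group Gh" and gG: "group G" using assms(1,2) unfolding E_group_def by auto
  have eh: "embh ` \<alpha> \<subseteq> carrier Gh"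
    using assms(1,3) unfolding E_group_def by (meson image_mono subset_trans)
  have e: "emb ` \<alpha> \<subseteq> carrier G"
    using assms(2,3) unfolding E_group_def by (meson image_mono subset_trans)
  have sK: "subgroup (generate Gh (embh ` \<alpha>)) Gh" using group.generate_is_subgroup[OF gGh eh] .
  have sL: "subgroup (generate G (emb ` \<alpha>)) G" using group.generate_is_subgroup[OF gG e] .
  have gK: "group K" unfolding K_def subgrp_def using subgroup.subgroup_is_group[OF sK gGh] .
  have gL: "group L" unfolding L_def subgrp_def using subgroup.subgroup_is_group[OF sL gG] .
  have cK: "carrier K = generate Gh (embh ` \<alpha>)" unfolding K_def subgrp_def by simp
  have hom: "group_hom K L h" using gK gL assms(4) unfolding group_hom_def group_hom_axioms_def K_def L_def by simp
  have ehK: "embh ` \<beta> \<subseteq> carrier K" if "\<beta> \<subseteq> \<alpha>" for \<beta>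
    using that cK generate.incl[of _ "embh ` \<alpha>" Gh] by blast
  have genK: "generate K (embh ` \<beta>) = generate Gh (embh ` \<beta>)" if "\<beta> \<subseteq> \<alpha>" for \<beta>
    using group.generate_consistent[OF gGh _ sK, of "embh ` \<beta>"] that
      generate.incl[of _ "embh ` \<alpha>" Gh] unfolding K_def subgrp_def by blast
  have img: "h ` generate K (embh ` \<beta>) = generate L (emb ` \<beta>)" if "\<beta> \<subseteq> \<alpha>" for \<beta>
  proof -
    have "h ` embh ` \<beta> = emb ` \<beta>" using that assms(5) by (force simp: image_image)
    then show ?thesis using group_hom.generate_img[OF hom ehK[OF that]] by simp
  qed
  have subK: "subgroup (generate K (embh ` \<beta>)) K" if "\<beta> \<subseteq> \<alpha>" for \<beta>
    using group.generate_is_subgroup[OF gK ehK[OF that]] .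
  have lcK: "x \<in> g <#\<^bsub>K\<^esub> S \<longleftrightarrow> (\<exists>s\<in>S. x = g \<otimes>\<^bsub>K\<^esub> s)" for x g S
    unfolding l_coset_def by auto
  have lcL: "x \<in> g <#\<^bsub>L\<^esub> S \<longleftrightarrow> (\<exists>s\<in>S. x = g \<otimes>\<^bsub>L\<^esub> s)" for x g S
    unfolding l_coset_def by auto
  show ?thesis
    unfolding N_acyclic_def
  proof (intro allI impI notI)
    fix n g a assume nN: "2 \<le> n \<and> n \<le> N" and cc: "coset_cycle (subgrp Gh embh \<alpha>) embh \<alpha> n g a"
    define Hb where "Hb \<beta> = generate K (embh ` \<beta>)" for \<beta>
    define Gb where "Gb \<beta> = generate L (emb ` \<beta>)" for \<beta>
    define nx where "nx i = Suc i mod n" for i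
    define pv where "pv i = (i + n - 1) mod n" for i
    have C: "\<And>i. i < n \<Longrightarrow> g i \<in> carrier K \<and> a i \<subseteq> \<alpha> \<and> g (nx i) \<in> g i <#\<^bsub>K\<^esub> Hb (a i) \<and>
        (g i <#\<^bsub>K\<^esub> Hb (a i \<inter> a (pv i))) \<inter> (g (nx i) <#\<^bsub>K\<^esub> Hb (a i \<inter> a (nx i))) = {}"
      using cc unfolding coset_cycle_def K_def Hb_def nx_def pv_def by blast
    have n2: "2 \<le> n" using nN by simp
    have nxl: "nx i < n" for i using n2 unfolding nx_def by simp
    have proper: "a i \<subset> \<alpha>" if "i < n" for i
    proof (rule ccontr)
      assume "\<not> a i \<subset> \<alpha>"
      then have ai: "a i = \<alpha>" using C[OF that] by blast
      define j where "j = pv i"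
      have j: "j < n" "nx j = i" using idx_prev[OF that n2] unfolding j_def pv_def nx_def by auto
      have Cj: "g j \<in> carrier K" "a j \<subseteq> \<alpha>" "g i \<in> g j <#\<^bsub>K\<^esub> Hb (a j)"
        "(g j <#\<^bsub>K\<^esub> Hb (a j \<inter> a (pv j))) \<inter> (g i <#\<^bsub>K\<^esub> Hb (a j \<inter> a i)) = {}"
        using C[OF j(1)] j(2) by auto
      have aj: "a j \<inter> a i = a j" using ai Cj(2) by blast
      obtain x where x: "x \<in> Hb (a j)" "g i = g j \<otimes>\<^bsub>K\<^esub> x" using Cj(3) unfolding lcK by blast
      have sj: "subgroup (Hb (a j)) K" using subK[OF Cj(2)] unfolding Hb_def .
      have sj2: "subgroup (Hb (a j \<inter> a (pv j))) K" using subK[of "a j \<inter> a (pv j)"] Cj(2) unfolding Hb_def by blast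
      have xK: "x \<in> carrier K" using x(1) subgroup.subset[OF sj] by blast
      have ix: "inv\<^bsub>K\<^esub> x \<in> Hb (a j)" using subgroup.m_inv_closed[OF sj x(1)] .
      have "g j = g i \<otimes>\<^bsub>K\<^esub> inv\<^bsub>K\<^esub> x" using x(2) xK Cj(1) gK
        by (simp add: monoid.m_assoc[OF group.is_monoid[OF gK]] group.r_inv[OF gK] group.inv_closed[OF gK] monoid.r_one[OF group.is_monoid[OF gK]])
      then have m1: "g j \<in> g i <#\<^bsub>K\<^esub> Hb (a j \<inter> a i)" unfolding lcK using ix aj by metis
      have "g j = g j \<otimes>\<^bsub>K\<^esub> \<one>\<^bsub>K\<^esub>" using Cj(1) gK by (simp add: group.is_monoid monoid.r_one)
      then have m2: "g j \<in> g j <#\<^bsub>K\<^esub> Hb (a j \<inter> a (pv j))"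
        unfolding lcK using subgroup.one_closed[OF sj2] by metis
      show False using m1 m2 Cj(4) by blast
    qed
    have "coset_cycle L emb \<alpha> n (h \<circ> g) a"
      unfolding coset_cycle_def
    proof (intro conjI allI impI n2)
      fix i assume i: "i < n"
      note Ci = C[OF i]
      have hom2: "h \<in> hom K L" using hom unfolding group_hom_def group_hom_axioms_def by simp
      have hK: "\<And>y. y \<in> carrier K \<Longrightarrow> h y \<in> carrier L" using hom2 unfolding hom_def by auto
      have hm: "\<And>y z. y \<in> carrier K \<Longrightarrow> z \<in> carrier K \<Longrightarrow> h (y \<otimes>\<^bsub>K\<^esub> z) = h y \<otimes>\<^bsub>L\<^esub> h z"
        using hom2 unfolding hom_def by auto
      show "(h \<circ> g) i \<in> carrier L" using hK Ci by simp
      show "a i \<subseteq> \<alpha>" using Ci by simp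
      have sai: "subgroup (Hb (a i)) K" using subK[of "a i"] Ci unfolding Hb_def by blast
      obtain x where x: "x \<in> Hb (a i)" "g (nx i) = g i \<otimes>\<^bsub>K\<^esub> x" using Ci unfolding lcK by blast
      have xK: "x \<in> carrier K" using x(1) subgroup.subset[OF sai] by blast
      have hx: "h x \<in> Gb (a i)" using img[of "a i"] Ci x(1) unfolding Hb_def Gb_def by blast
      have hgn: "h (g (nx i)) = h (g i) \<otimes>\<^bsub>L\<^esub> h x" using x(2) hm xK Ci by simp
      show "(h \<circ> g) (Suc i mod n) \<in> (h \<circ> g) i <#\<^bsub>L\<^esub> generate L (emb ` a i)"
        unfolding lcL using hgn hx unfolding Gb_def nx_def by fastforce
      show "((h \<circ> g) i <#\<^bsub>L\<^esub> generate L (emb ` (a i \<inter> a ((i + n - 1) mod n)))) \<inter>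
         ((h \<circ> g) (Suc i mod n) <#\<^bsub>L\<^esub> generate L (emb ` (a i \<inter> a (Suc i mod n)))) = {}"
      proof (rule ccontr)
        define \<beta> where "\<beta> = a i \<inter> a (pv i)"
        define \<gamma> where "\<gamma> = a i \<inter> a (nx i)"
        have b: "\<beta> \<subseteq> a i" "\<gamma> \<subseteq> a i" "\<beta> \<subseteq> \<alpha>" "\<gamma> \<subseteq> \<alpha>" using Ci unfolding \<beta>_def \<gamma>_def by auto
        assume "\<not> ?thesis"
        then obtain y where "y \<in> h (g i) <#\<^bsub>L\<^esub> Gb \<beta>" "y \<in> h (g (nx i)) <#\<^bsub>L\<^esub> Gb \<gamma>"
          unfolding Gb_def \<beta>_def \<gamma>_def pv_def nx_def by auto
        then obtain u v where uv: "u \<in> Gb \<beta>" "v \<in> Gb \<gamma>" "h (g i) \<otimes>\<^bsub>L\<^esub> u = h (g (nx i)) \<otimes>\<^bsub>L\<^esub> v"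
          unfolding lcL by metis
        obtain u' where u': "u' \<in> Hb \<beta>" "u = h u'" using uv(1) img[OF b(3)] unfolding Hb_def Gb_def by blast
        obtain v' where v': "v' \<in> Hb \<gamma>" "v = h v'" using uv(2) img[OF b(4)] unfolding Hb_def Gb_def by blast
        have mono: "Hb \<beta> \<subseteq> Hb (a i)" "Hb \<gamma> \<subseteq> Hb (a i)"
          using group.mono_generate[OF gK] b ehK[of "a i"] Ci unfolding Hb_def by (metis image_mono)+
        have u'K: "u' \<in> carrier K" and v'K: "v' \<in> carrier K"
          using u'(1) v'(1) mono subgroup.subset[OF sai] by auto
        have giK: "g i \<in> carrier K" using Ci by simp
        have L1: "h (g i) \<in> carrier L" "h x \<in> carrier L" "h u' \<in> carrier L" "h v' \<in> carrier L"
          using hK giK xK u'K v'K by auto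
        have "h (g i) \<otimes>\<^bsub>L\<^esub> h u' = h (g i) \<otimes>\<^bsub>L\<^esub> (h x \<otimes>\<^bsub>L\<^esub> h v')"
          using uv(3) u' v' hgn L1 gL by (simp add: group.is_monoid monoid.m_assoc)
        then have "h u' = h x \<otimes>\<^bsub>L\<^esub> h v'" 
          using monoid.Units_l_cancel[OF group.is_monoid[OF gL], of "h (g i)" "h u'" "h x \<otimes>\<^bsub>L\<^esub> h v'"]
            group.Units_eq[OF gL] monoid.m_closed[OF group.is_monoid[OF gL]] L1 by simp
        then have eq: "h u' = h (x \<otimes>\<^bsub>K\<^esub> v')" using hm xK v'K by simp
        have xv: "x \<otimes>\<^bsub>K\<^esub> v' \<in> Hb (a i)" using subgroup.m_closed[OF sai x(1)] v'(1) mono by blast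
        have inj: "inj_on h (Hb (a i))" using assms(6) proper[OF i] genK[of "a i"] Ci unfolding Hb_def by simp
        have "u' = x \<otimes>\<^bsub>K\<^esub> v'" using inj_onD[OF inj eq] u'(1) mono xv by blast
        then have "g i \<otimes>\<^bsub>K\<^esub> u' = g (nx i) \<otimes>\<^bsub>K\<^esub> v'" using x(2) giK xK v'K gK
          by (simp add: group.is_monoid monoid.m_assoc)
        then have "g i \<otimes>\<^bsub>K\<^esub> u' \<in> (g i <#\<^bsub>K\<^esub> Hb \<beta>) \<inter> (g (nx i) <#\<^bsub>K\<^esub> Hb \<gamma>)"
          using u'(1) v'(1) lcK by (metis IntI)
        then show False using Ci unfolding \<beta>_def \<gamma>_def by blast
      qed
    qed
    then show False using assms(8) nN unfolding N_acyclic_def L_def by blast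
  qed
qed

end
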